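(* Let $(\mathfrak g,d,[\,,\,])$ be a differential graded Lie algebra over $k=\mathbb R$ or $\mathbb C$ such that each $\mathfrak g^i$ is a normed space, $d$ and $[\,,\,]$ are continuous, and there are a graded subspace $\mathbf H\subset\mathfrak g$, a projection $P_{\mathbf H}:\mathfrak g\to\mathbf H$ and a linear map $\eta:\mathfrak g\to\mathfrak g[-1]$ with $\mathrm{Id}=P_{\mathbf H}+d\eta+\eta d$ (also on the completion). Let $(\mathfrak g,\mu_* )$ be the $L_\infty$-algebra with $\mu_1=d$, $\mu_2(v_1,v_2)=(d\eta+\eta d)[v_1,v_2]$, and $\mu_n(v_1,\dots,v_n)=(-1)^n\sum_{\sigma\in Sh(n-1,n)}(-1)^{\tilde\sigma}e(\sigma)\eta[\mu_{n-1}(v_{\sigma(1)},\dots,v_{\sigma(n-1)}),v_{\sigma(n)}]$ for $n\ge3$. Fix a basis $[\gamma_\alpha]$ of $H^1(\mathfrak g,d)$ with representatives $\gamma_\alpha\in\ker d\cap\mathfrak g^1$, coordinates $t=(t^\alpha)$, and let $\Gamma(t)=\sum_{n\ge1}\Gamma_n(t)$ with $\Gamma_1=\sum_\alpha\gamma_\alpha t^\alpha$ and $\Gamma_n=-\frac12\eta\big(\sum_{k=1}^{n-1}[\Gamma_k(t),\Gamma_{n-k}(t)]\big)$ for $n\ge2$. Then for every $t$ (in the domain of convergence of $\Gamma(t)$) in the Kuranishi space $\mathcal K^0_{\mathfrak g}=\{t : P_{\mathbf H}[\Gamma(t),\Gamma(t)]=0\}$ one has $\mu_2(\Gamma(t),\Gamma(t))=[\Gamma(t),\Gamma(t)]$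 and $\mu_n(\Gamma(t),\dots,\Gamma(t))=0$ for all $n\ge3$; consequently on $\mathcal K^0_{\mathfrak g}$ the $L_\infty$ Maurer–Cartan equation $\sum_{k\ge1}\frac{(-1)^{k(k+1)/2}}{k!}\mu_k(\Gamma(t),\dots,\Gamma(t))=0$ degenerates into the Maurer–Cartan equation $d\Gamma(t)+\frac12[\Gamma(t),\Gamma(t)]=0$ of the differential graded Lie algebra $(\mathfrak g,d,[\,,\,])$.
   Context: $\mathfrak g[n]^i=\mathfrak g^{i+n}$, so $\eta$ lowers degree by one; $\tilde v$ is the parity of the degree of homogeneous $v$. $Sh(n-1,n)$ is the set of permutations $\sigma$ of $\{1,\dots,n\}$ with $\sigma(1)<\dots<\sigma(n-1)$; $\tilde\sigma$ is its parity and the Koszul sign $e(\sigma)$ is defined by $v_{\sigma(1)}\wedge\dots\wedge v_{\sigma(n)}=(-1)^{\tilde\sigma}e(\sigma)v_1\wedge\dots\wedge v_n$. The coordinates $t^\alpha$ are even, so $\Gamma(t)$ has degree $1$. *)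

theory Defs
  imports "HOL-Analysis.Analysis" "HOL-Combinatorics.Permutations"
begin

definition kmod :: "('k::real_normed_field \<Rightarrow> 'v::real_normed_vector \<Rightarrow> 'v) \<Rightarrow> bool" where
  "kmod sc \<longleftrightarrow>
     (\<forall>a b v. sc (a + b) v = sc a v + sc b v) \<and>
     (\<forall>a v w. sc a (v + w) = sc a v + sc a w) \<and>
     (\<forall>a b v. sc (a * b) v = sc a (sc b v)) \<and>
     (\<forall>v. sc 1 v = v) \<and>
     (\<forall>r v. sc (of_real r) v = scaleR r v) \<and>
     (\<forall>a v. norm (sc a v) = norm a * norm v)"

definition klinear :: "('k \<Rightarrow> 'v::real_normed_vector \<Rightarrow> 'v) \<Rightarrow> ('v \<Rightarrow> 'v) \<Rightarrow> bool" where
  "klinear sc f \<longleftrightarrow> (\<forall>x y. f (x + y) = f x + f y) \<and> (\<forall>c x. f (sc c x) = sc c (f x))"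

definition kbilinear :: "('k \<Rightarrow> 'v::real_normed_vector \<Rightarrow> 'v) \<Rightarrow> ('v \<Rightarrow> 'v \<Rightarrow> 'v) \<Rightarrow> bool" where
  "kbilinear sc b \<longleftrightarrow> (\<forall>x. klinear sc (b x)) \<and> (\<forall>y. klinear sc (\<lambda>x. b x y))"

definition ksubspace :: "('k \<Rightarrow> 'v::real_normed_vector \<Rightarrow> 'v) \<Rightarrow> 'v set \<Rightarrow> bool" where
  "ksubspace sc S \<longleftrightarrow> 0 \<in> S \<and> (\<forall>x\<in>S. \<forall>y\<in>S. x + y \<in> S) \<and> (\<forall>c. \<forall>x\<in>S. sc c x \<in> S)"

text \<open>The graded pieces g^i are subspaces G i of an ambient normed space; their sum is direct.\<close>
definition graded_direct :: "(int \<Rightarrow> 'v::real_normed_vector set) \<Rightarrow> bool" where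
  "graded_direct G \<longleftrightarrow>
     (\<forall>I x. finite I \<longrightarrow> (\<forall>i\<in>I. x i \<in> G i) \<longrightarrow> (\<Sum>i\<in>I. x i) = 0 \<longrightarrow> (\<forall>i\<in>I. x i = 0))"

text \<open>Degree of a homogeneous element (arbitrary for 0, which never matters).\<close>
definition gdeg :: "(int \<Rightarrow> 'v set) \<Rightarrow> 'v \<Rightarrow> int" where
  "gdeg G v = (THE i. v \<in> G i)"

definition sgn_par :: "int \<Rightarrow> real" where
  "sgn_par m = (if even m then 1 else -1)"

definition DGLA :: "('k::real_normed_field \<Rightarrow> 'v::real_normed_vector \<Rightarrow> 'v) \<Rightarrow> (int \<Rightarrow> 'v set)
    \<Rightarrow> ('v \<Rightarrow> 'v) \<Rightarrow> ('v \<Rightarrow> 'v \<Rightarrow> 'v) \<Rightarrow> bool" where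
  "DGLA sc G d br \<longleftrightarrow>
     kmod sc \<and> (\<forall>i. ksubspace sc (G i)) \<and> graded_direct G \<and>
     klinear sc d \<and> kbilinear sc br \<and>
     (\<forall>i. \<forall>x\<in>G i. d x \<in> G (i + 1)) \<and>
     (\<forall>i. \<forall>x\<in>G i. d (d x) = 0) \<and>
     (\<forall>i j. \<forall>x\<in>G i. \<forall>y\<in>G j. br x y \<in> G (i + j)) \<and>
     (\<forall>i j. \<forall>x\<in>G i. \<forall>y\<in>G j. br x y = - (sgn_par (i * j) *\<^sub>R br y x)) \<and>
     (\<forall>i j l. \<forall>x\<in>G i. \<forall>y\<in>G j. \<forall>z\<in>G l.
        br x (br y z) = br (br x y) z + sgn_par (i * j) *\<^sub>R br y (br x z)) \<and>
     (\<forall>i j. \<forall>x\<in>G i. \<forall>y\<in>G j. d (br x y) = br (d x) y + sgn_par i *\<^sub>R br x (d y))"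

text \<open>Sh(n-1,n), zero-indexed: permutations of {0..<n} increasing on {0..<n-1}.\<close>
definition shuffles :: "nat \<Rightarrow> (nat \<Rightarrow> nat) set" where
  "shuffles n = {\<sigma>. \<sigma> permutes {..<n} \<and> (\<forall>i j. i < j \<and> j < n - 1 \<longrightarrow> \<sigma> i < \<sigma> j)}"

text \<open>Koszul sign e(sigma): product over inversions of (-1)^(|v_a||v_b|) of the swapped
  homogeneous elements, so that v_sigma(1) ^ ... ^ v_sigma(n) = sign(sigma) e(sigma) v_1 ^ ... ^ v_n
  in the graded exterior algebra.\<close>
definition koszul :: "(int \<Rightarrow> 'v::real_normed_vector set) \<Rightarrow> 'v list \<Rightarrow> (nat \<Rightarrow> nat) \<Rightarrow> real" where
  "koszul G vs \<sigma> =
     (\<Prod>p\<in>{(a, b). a < b \<and> b < length vs \<and> \<sigma> b < \<sigma> a}.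
        sgn_par (gdeg G (vs ! \<sigma> (fst p)) * gdeg G (vs ! \<sigma> (snd p))))"

fun mu :: "(int \<Rightarrow> 'v::real_normed_vector set) \<Rightarrow> ('v \<Rightarrow> 'v) \<Rightarrow> ('v \<Rightarrow> 'v \<Rightarrow> 'v) \<Rightarrow> ('v \<Rightarrow> 'v)
    \<Rightarrow> nat \<Rightarrow> 'v list \<Rightarrow> 'v" where
  "mu G d br eta 0 vs = 0"
| "mu G d br eta (Suc 0) vs = d (vs ! 0)"
| "mu G d br eta (Suc (Suc 0)) vs =
     d (eta (br (vs ! 0) (vs ! 1))) + eta (d (br (vs ! 0) (vs ! 1)))"
| "mu G d br eta (Suc (Suc (Suc m))) vs =
     ((-1) ^ Suc (Suc (Suc m))) *\<^sub>R
       (\<Sum>\<sigma>\<in>shuffles (Suc (Suc (Suc m))).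
          (real_of_int (sign \<sigma>) * koszul G vs \<sigma>) *\<^sub>R
            eta (br (mu G d br eta (Suc (Suc m)) (map (\<lambda>i. vs ! \<sigma> i) [0..<Suc (Suc m)]))
                    (vs ! \<sigma> (Suc (Suc m)))))"

fun Gam :: "('k \<Rightarrow> 'v::real_normed_vector \<Rightarrow> 'v) \<Rightarrow> ('v \<Rightarrow> 'v \<Rightarrow> 'v) \<Rightarrow> ('v \<Rightarrow> 'v)
    \<Rightarrow> ('a \<Rightarrow> 'v) \<Rightarrow> ('a \<Rightarrow> 'k::zero) \<Rightarrow> nat \<Rightarrow> 'v" where
  "Gam sc br eta gam t n =
     (if n = 0 then 0
      else if n = 1 then (\<Sum>\<alpha>\<in>{\<alpha>. t \<alpha> \<noteq> 0}. sc (t \<alpha>) (gam \<alpha>))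
      else - ((1/2) *\<^sub>R eta (\<Sum>k\<in>{1..<n}. br (Gam sc br eta gam t k) (Gam sc br eta gam t (n - k)))))"

end

theory Submission
  imports Defs
begin


declare Gam.simps[simp del]

lemma ksub_sum: "ksubspace sc S \<Longrightarrow> (\<forall>x\<in>A. f x \<in> S) \<Longrightarrow> sum f A \<in> S"
  by (induction A rule: infinite_finite_induct) (auto simp: ksubspace_def)

lemma ksub_scaleR: "kmod sc \<Longrightarrow> ksubspace sc S \<Longrightarrow> x \<in> S \<Longrightarrow> r *\<^sub>R x \<in> S"
proof -
  assume a: "kmod sc" "ksubspace sc S" "x \<in> S"
  have "sc (of_real r) x \<in> S" using a(2,3) unfolding ksubspace_def by blast
  moreover have "sc (of_real r) x = r *\<^sub>R x" using a(1) unfolding kmod_def by blast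
  ultimately show ?thesis by simp
qed

lemma klin0: "klinear sc f \<Longrightarrow> f 0 = 0"
  unfolding klinear_def by (metis add_cancel_right_right add_0)

lemma mu_rep:
  assumes h: "br (mu G d br eta (Suc (Suc m)) (replicate (Suc (Suc m)) g)) g = 0"
    and e0: "eta 0 = 0"
  shows "mu G d br eta (Suc (Suc (Suc m))) (replicate (Suc (Suc (Suc m))) g) = 0"
proof -
  have "\<forall>\<sigma>\<in>shuffles (Suc (Suc (Suc m))). (real_of_int (sign \<sigma>) * koszul G (replicate (Suc (Suc (Suc m))) g) \<sigma>) *\<^sub>R
            eta (br (mu G d br eta (Suc (Suc m)) (map (\<lambda>i. replicate (Suc (Suc (Suc m))) g ! \<sigma> i) [0..<Suc (Suc m)]))
                    (replicate (Suc (Suc (Suc m))) g ! \<sigma> (Suc (Suc m)))) = 0"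
  proof
    fix \<sigma> assume s: "\<sigma> \<in> shuffles (Suc (Suc (Suc m)))"
    then have p: "\<sigma> permutes {..<Suc (Suc (Suc m))}" by (simp add: shuffles_def)
    have lt: "\<And>i. i < Suc (Suc (Suc m)) \<Longrightarrow> \<sigma> i < Suc (Suc (Suc m))"
      using permutes_in_image[OF p] by simp
    have "map (\<lambda>i. replicate (Suc (Suc (Suc m))) g ! \<sigma> i) [0..<Suc (Suc m)] = map (\<lambda>i. g) [0..<Suc (Suc m)]"
      proof (rule map_cong)
      fix i assume "i \<in> set [0..<Suc (Suc m)]"
      then have "i < Suc (Suc (Suc m))" by auto
      then have "\<sigma> i < Suc (Suc (Suc m))" by (rule lt)
      then show "replicate (Suc (Suc (Suc m))) g ! \<sigma> i = g" by (simp only: nth_replicate)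
    qed simp
    also have "\<dots> = replicate (Suc (Suc m)) g" by (simp add: map_replicate_const)
    finally show "(real_of_int (sign \<sigma>) * koszul G (replicate (Suc (Suc (Suc m))) g) \<sigma>) *\<^sub>R
            eta (br (mu G d br eta (Suc (Suc m)) (map (\<lambda>i. replicate (Suc (Suc (Suc m))) g ! \<sigma> i) [0..<Suc (Suc m)]))
                    (replicate (Suc (Suc (Suc m))) g ! \<sigma> (Suc (Suc m)))) = 0"
      using lt[of "Suc (Suc m)"] h e0 nth_replicate[of "\<sigma> (Suc (Suc m))" "Suc (Suc (Suc m))" g]
      by (simp del: replicate.simps replicate_Suc)
  qed
  then show ?thesis by (simp only: mu.simps sum.neutral) simp
qed

theorem mainTheorem5:
  fixes sc :: "'k::real_normed_field \<Rightarrow> 'v::real_normed_vector \<Rightarrow> 'v"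
    and G :: "int \<Rightarrow> 'v set"
    and d eta P :: "'v \<Rightarrow> 'v"
    and br :: "'v \<Rightarrow> 'v \<Rightarrow> 'v"
    and Hs :: "int \<Rightarrow> 'v set"
    and gam :: "'a \<Rightarrow> 'v"
    and t :: "'a \<Rightarrow> 'k"
  assumes dgla: "DGLA sc G d br"
    and closed: "\<forall>i. closed (G i)"
    and d_cont: "\<forall>i. continuous_on (G i) d"
    and br_cont: "\<forall>i j. continuous_on (G i \<times> G j) (\<lambda>p. br (fst p) (snd p))"
    and H_sub: "\<forall>i. ksubspace sc (Hs i) \<and> Hs i \<subseteq> G i"
    and P_lin: "klinear sc P" and P_range: "\<forall>i. \<forall>x\<in>G i. P x \<in> Hs i"
    and P_proj: "\<forall>i. \<forall>h\<in>Hs i. P h = h"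
    and P_cont: "\<forall>i. continuous_on (G i) P"
    and eta_lin: "klinear sc eta" and eta_deg: "\<forall>i. \<forall>x\<in>G i. eta x \<in> G (i - 1)"
    and eta_cont: "\<forall>i. continuous_on (G i) eta"
    and homotopy: "\<forall>i. \<forall>x\<in>G i. x = P x + d (eta x) + eta (d x)"
    and gam_cl: "\<forall>\<alpha>. gam \<alpha> \<in> G 1 \<and> d (gam \<alpha>) = 0"
    and gam_span: "\<forall>z\<in>G 1. d z = 0 \<longrightarrow>
        (\<exists>c :: 'a \<Rightarrow> 'k. finite {\<alpha>. c \<alpha> \<noteq> 0} \<and>
          (\<exists>y\<in>G 0. z = (\<Sum>\<alpha>\<in>{\<alpha>. c \<alpha> \<noteq> 0}. sc (c \<alpha>) (gam \<alpha>)) + d y))"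
    and gam_indep: "\<forall>c :: 'a \<Rightarrow> 'k. finite {\<alpha>. c \<alpha> \<noteq> 0} \<longrightarrow>
        (\<exists>y\<in>G 0. (\<Sum>\<alpha>\<in>{\<alpha>. c \<alpha> \<noteq> 0}. sc (c \<alpha>) (gam \<alpha>)) = d y) \<longrightarrow> (\<forall>\<alpha>. c \<alpha> = 0)"
    and t_fin: "finite {\<alpha>. t \<alpha> \<noteq> 0}"
    and t_conv: "summable (Gam sc br eta gam t)"
    and kuranishi: "P (br (suminf (Gam sc br eta gam t)) (suminf (Gam sc br eta gam t))) = 0"
  shows "mu G d br eta 2 [suminf (Gam sc br eta gam t), suminf (Gam sc br eta gam t)]
           = br (suminf (Gam sc br eta gam t)) (suminf (Gam sc br eta gam t))
       \<and> (\<forall>n\<ge>3. mu G d br eta n (replicate n (suminf (Gam sc br eta gam t))) = 0)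
       \<and> ((\<Sum>k. (((-1) ^ (Suc k * (Suc k + 1) div 2)) / fact (Suc k)) *\<^sub>R
                 mu G d br eta (Suc k) (replicate (Suc k) (suminf (Gam sc br eta gam t)))) = 0
          \<longleftrightarrow> d (suminf (Gam sc br eta gam t))
                + (1/2) *\<^sub>R br (suminf (Gam sc br eta gam t)) (suminf (Gam sc br eta gam t)) = 0)"
proof -
  define g where "g = suminf (Gam sc br eta gam t)"
  have D: "kmod sc \<and> (\<forall>i. ksubspace sc (G i)) \<and> kbilinear sc br \<and>
     (\<forall>i j. \<forall>x\<in>G i. \<forall>y\<in>G j. br x y \<in> G (i + j)) \<and>
     (\<forall>i j. \<forall>x\<in>G i. \<forall>y\<in>G j. br x y = - (sgn_par (i * j) *\<^sub>R br y x)) \<and>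
     (\<forall>i j l. \<forall>x\<in>G i. \<forall>y\<in>G j. \<forall>z\<in>G l.
        br x (br y z) = br (br x y) z + sgn_par (i * j) *\<^sub>R br y (br x z))"
    using dgla unfolding DGLA_def by (elim conjE) (intro conjI; assumption)
  have km: "kmod sc" using D by blast
  have ks: "\<forall>i. ksubspace sc (G i)" using D by blast
  have blin: "kbilinear sc br" using D by blast
  have brdeg: "\<forall>i j. \<forall>x\<in>G i. \<forall>y\<in>G j. br x y \<in> G (i + j)" using D by blast
  have anti: "\<forall>i j. \<forall>x\<in>G i. \<forall>y\<in>G j. br x y = - (sgn_par (i * j) *\<^sub>R br y x)" using D by blast
  have jac: "\<forall>i j l. \<forall>x\<in>G i. \<forall>y\<in>G j. \<forall>z\<in>G l.
        br x (br y z) = br (br x y) z + sgn_par (i * j) *\<^sub>R br y (br x z)" using D by blast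
  have e0: "eta 0 = 0" using klin0[OF eta_lin] .
  have b0: "\<And>y. br 0 y = 0" using blin unfolding kbilinear_def by (metis klin0)
  have GamG: "Gam sc br eta gam t n \<in> G 1" for n
  proof (induction n rule: less_induct)
    case (less n)
    show ?case
    proof (cases "n = 0")
      case True then show ?thesis using ks by (subst Gam.simps) (simp add: ksubspace_def)
    next
      case n0: False
      show ?thesis
      proof (cases "n = 1")
        case True
        have "(\<Sum>\<alpha>\<in>{\<alpha>. t \<alpha> \<noteq> 0}. sc (t \<alpha>) (gam \<alpha>)) \<in> G 1"
          by (rule ksub_sum) (use ks gam_cl in \<open>auto simp: ksubspace_def\<close>)
        then show ?thesis using True by (subst Gam.simps) simp
      next
        case False
        have "(\<Sum>k\<in>{1..<n}. br (Gam sc br eta gam t k) (Gam sc br eta gam t (n - k))) \<in> G (1 + 1)"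
        proof (rule ksub_sum)
          show "ksubspace sc (G (1 + 1))" using ks by blast
          show "\<forall>x\<in>{1..<n}. br (Gam sc br eta gam t x) (Gam sc br eta gam t (n - x)) \<in> G (1 + 1)"
          proof
            fix x assume x: "x \<in> {1..<n}"
            then have "Gam sc br eta gam t x \<in> G 1" "Gam sc br eta gam t (n - x) \<in> G 1"
              using less by auto
            then show "br (Gam sc br eta gam t x) (Gam sc br eta gam t (n - x)) \<in> G (1 + 1)"
              using brdeg by blast
          qed
        qed
        then have "eta (\<Sum>k\<in>{1..<n}. br (Gam sc br eta gam t k) (Gam sc br eta gam t (n - k))) \<in> G ((1 + 1) - 1)"
          using eta_deg by blast
        then have "eta (\<Sum>k\<in>{1..<n}. br (Gam sc br eta gam t k) (Gam sc br eta gam t (n - k))) \<in> G 1"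
          by simp
        then have "(-1/2) *\<^sub>R eta (\<Sum>k\<in>{1..<n}. br (Gam sc br eta gam t k) (Gam sc br eta gam t (n - k))) \<in> G 1"
          using ksub_scaleR[OF km] ks by blast
        then show ?thesis using n0 False by (subst Gam.simps) simp
      qed
    qed
  qed
  have gG: "g \<in> G 1"
  proof -
    have L: "(\<lambda>n. \<Sum>i<n. Gam sc br eta gam t i) \<longlonglongrightarrow> g"
      unfolding g_def using summable_LIMSEQ[OF t_conv] .
    have S: "(\<Sum>i<n. Gam sc br eta gam t i) \<in> G 1" for n
    proof -
      show "(\<Sum>i<n. Gam sc br eta gam t i) \<in> G 1"
        by (rule ksub_sum) (use ks GamG in auto)
    qed
    have C: "closed (G 1)" using closed by blast
    show ?thesis by (rule closed_sequentially[OF C S L])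
  qed
  have bgg: "br g g \<in> G 2" using brdeg gG by (metis one_add_one)
  have mu2: "mu G d br eta 2 [g, g] = br g g"
  proof -
    have "br g g = P (br g g) + d (eta (br g g)) + eta (d (br g g))"
      using homotopy bgg by blast
    moreover have k: "P (br g g) = 0" using kuranishi unfolding g_def .
    ultimately have e: "d (eta (br g g)) + eta (d (br g g)) = br g g" by (simp only: k add_0_left)
    have "mu G d br eta 2 [g, g] = d (eta (br g g)) + eta (d (br g g))"
      by (simp add: numeral_2_eq_2)
    then show ?thesis using e by (simp only:)
  qed
  have jac0: "br (br g g) g = 0"
  proof -
    have j: "br g (br g g) = br (br g g) g + sgn_par (1 * 1) *\<^sub>R br g (br g g)"
      using jac gG by blast
    have a: "br g (br g g) = - (sgn_par (1 * 2) *\<^sub>R br (br g g) g)"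
      using anti gG bgg by blast
    have s1: "sgn_par 1 = -1" and s2: "sgn_par 2 = 1" by (simp_all add: sgn_par_def)
    from j a s1 s2 have m: "- br (br g g) g = br (br g g) g + br (br g g) g"
      by simp
    have "br (br g g) g + (br (br g g) g + br (br g g) g) = 0" using m by (metis neg_eq_iff_add_eq_0)
    moreover have "(3::real) *\<^sub>R br (br g g) g = br (br g g) g + (br (br g g) g + br (br g g) g)"
    proof -
      have "(3::real) = 1 + (1 + 1)" by simp
      then show ?thesis by (simp only: scaleR_add_left scaleR_one)
    qed
    ultimately show ?thesis by simp
  qed
  have h: "br (mu G d br eta (Suc (Suc m)) (replicate (Suc (Suc m)) g)) g = 0" for m
  proof (induction m)
    case 0
    then show ?case using mu2 jac0 by (simp only: numeral_2_eq_2 replicate.simps)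
  next
    case (Suc m)
    have "mu G d br eta (Suc (Suc (Suc m))) (replicate (Suc (Suc (Suc m))) g) = 0"
      by (rule mu_rep[where eta=eta and br=br and G=G and d=d and g=g, OF Suc.IH e0])
    then show ?case using b0 by simp
  qed
  have mun: "\<forall>n\<ge>3. mu G d br eta n (replicate n g) = 0"
  proof (intro allI impI)
    fix n :: nat assume "n \<ge> 3"
    then have "n = Suc (Suc (Suc (n - 3)))" by arith
    then obtain m where "n = Suc (Suc (Suc m))" by blast
    then show "mu G d br eta n (replicate n g) = 0" using mu_rep[where eta=eta and br=br and G=G and d=d and g=g, OF h e0] by simp
  qed
  define f where "f = (\<lambda>k. (((-1) ^ (Suc k * (Suc k + 1) div 2)) / fact (Suc k)) *\<^sub>R
                 mu G d br eta (Suc k) (replicate (Suc k) g))"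
  have fz: "f k = 0" if "k \<notin> {0, 1}" for k
  proof -
    have "Suc k \<ge> 3" using that by auto
    then have "mu G d br eta (Suc k) (replicate (Suc k) g) = 0" using mun by blast
    then show ?thesis unfolding f_def by (simp only: scaleR_zero_right)
  qed
  have "suminf f = (\<Sum>k\<in>{0,1}. f k)" by (rule suminf_finite) (use fz in auto)
  also have "\<dots> = f 0 + f 1" by simp
  also have "f 0 = - d g" unfolding f_def by simp
  also have "f 1 = - ((1/2) *\<^sub>R br g g)"
  proof -
    have e1: "Suc 1 = 2" "Suc 1 * (Suc 1 + 1) div 2 = 3" "fact (Suc 1) = (2::real)"
      by simp_all
    have e2: "replicate 2 g = [g, g]" by (simp add: numeral_2_eq_2)
    have "f 1 = (((-1) ^ 3) / 2) *\<^sub>R br g g" unfolding f_def by (simp only: e1 e2 mu2) simp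
    then show ?thesis by simp
  qed
  also have "- d g + - ((1/2) *\<^sub>R br g g) = - (d g + (1/2) *\<^sub>R br g g)" by simp
  finally have sf: "suminf f = - (d g + (1/2) *\<^sub>R br g g)" .
  show ?thesis
    unfolding g_def[symmetric] f_def[symmetric]
  proof (intro conjI)
    show "(suminf f = 0) = (d g + (1/2) *\<^sub>R br g g = 0)"
      unfolding sf by (rule neg_equal_0_iff_equal)
  qed (use mu2 mun in blast)+
qed

end
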